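(* Let $p$ be an odd prime, $q=p^m$, $q=et+1$ with integers $e\geq 2,t\geq 1$, $R_{e,q}=\mathbb{F}_q[u]/\langle u^e-1\rangle$ with orthogonal idempotents $\mu_1,\dots,\mu_e$ (see context), and assume $\gcd(n,q)\neq 1$. Let $\mathcal{C}=\langle\sum_{i=1}^e\mu_ig_i(x)\rangle$ be a cyclic code of length $n$ over $R_{e,q}$, where $g_i(x)\in\mathbb{F}_q[x]$ is monic and $g_i(x)\mid x^n-1$ for $1\leq i\leq e$. Then $\mathcal{C}$ is an LCD code if and only if, for every $1\leq i\leq e$, $g_i(x)$ is self-reciprocal and each monic irreducible factor of $g_i(x)$ has the same multiplicity in $g_i(x)$ as in $x^n-1$.
   Context: Write $u^e-1=\prod_{i=1}^e(u-\alpha_i)$ over $\mathbb{F}_q$, $G_i=u-\alpha_i$, $\widehat{G}_i=(u^e-1)/G_i$, $z_iG_i+h_i\widehat{G}_i=1$, $\mu_i=h_i\widehat{G}_i$; these are pairwise orthogonal idempotents summing to $1$. Cyclic codes are identified with ideals of $R_{e,q}[x]/\langle x^n-1\rangle$. A code is LCD if $\mathcal{C}\cap\mathcal{C}^\perp=\{0\}$ (Euclidean dual). A polynomial $g$ is self-reciprocal if its reciprocal $x^{\deg g}g(1/x)$ equals $g$ up to a nonzero scalar. *)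

theory Defs
  imports "HOL-Computational_Algebra.Computational_Algebra"
begin

(* The polynomial X^k - 1 (used both as u^e - 1 over F_q and as x^n - 1). *)
definition xpm1 :: "nat \<Rightarrow> 'a::field poly" where
  "xpm1 k = monom 1 k - 1"

(* Elements of R_{e,q} = F_q[u]/<u^e-1> are represented by their canonical
   representatives: polynomials in u reduced modulo u^e - 1. *)
definition in_R :: "nat \<Rightarrow> 'a::field poly \<Rightarrow> bool" where
  "in_R e r \<longleftrightarrow> r mod xpm1 e = r"

definition mu :: "nat \<Rightarrow> (nat \<Rightarrow> 'a::field) \<Rightarrow> (nat \<Rightarrow> 'a poly) \<Rightarrow> nat \<Rightarrow> 'a poly" where
  "mu e \<alpha> h i = (h i * (xpm1 e div [:- \<alpha> i, 1:])) mod xpm1 e"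

definition words :: "nat \<Rightarrow> nat \<Rightarrow> (nat \<Rightarrow> 'a::field poly) set" where
  "words e n = {v. \<forall>j. (j < n \<longrightarrow> in_R e (v j)) \<and> (n \<le> j \<longrightarrow> v j = 0)}"

(* Image of a polynomial in x with coefficients in F_q[u] in R[x]/<x^n-1>,
   as its coefficient vector (reduction mod x^n-1 and mod u^e-1). *)
definition to_word :: "nat \<Rightarrow> nat \<Rightarrow> 'a::field poly poly \<Rightarrow> nat \<Rightarrow> 'a poly" where
  "to_word e n P = (\<lambda>k. if k < n then
      (\<Sum>j\<le>degree P. if j mod n = k then coeff P j else 0) mod xpm1 e else 0)"

definition cyc_mult :: "nat \<Rightarrow> nat \<Rightarrow> (nat \<Rightarrow> 'a::field poly) \<Rightarrow> (nat \<Rightarrow> 'a poly) \<Rightarrow> nat \<Rightarrow> 'a poly" where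
  "cyc_mult e n a b = (\<lambda>k. if k < n then
      (\<Sum>i<n. \<Sum>j<n. if (i + j) mod n = k then a i * b j else 0) mod xpm1 e else 0)"

definition cyclic_code_gen :: "nat \<Rightarrow> nat \<Rightarrow> (nat \<Rightarrow> 'a::field poly) \<Rightarrow> (nat \<Rightarrow> 'a poly) set" where
  "cyclic_code_gen e n g = {cyc_mult e n a g | a. a \<in> words e n}"

definition eucl_inner :: "nat \<Rightarrow> nat \<Rightarrow> (nat \<Rightarrow> 'a::field poly) \<Rightarrow> (nat \<Rightarrow> 'a poly) \<Rightarrow> 'a poly" where
  "eucl_inner e n c v = (\<Sum>j<n. c j * v j) mod xpm1 e"

definition eucl_dual :: "nat \<Rightarrow> nat \<Rightarrow> (nat \<Rightarrow> 'a::field poly) set \<Rightarrow> (nat \<Rightarrow> 'a poly) set" where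
  "eucl_dual e n C = {v \<in> words e n. \<forall>c\<in>C. eucl_inner e n c v = 0}"

definition is_LCD :: "nat \<Rightarrow> nat \<Rightarrow> (nat \<Rightarrow> 'a::field poly) set \<Rightarrow> bool" where
  "is_LCD e n C \<longleftrightarrow> C \<inter> eucl_dual e n C = {(\<lambda>_. 0)}"

definition self_reciprocal :: "'a::field poly \<Rightarrow> bool" where
  "self_reciprocal g \<longleftrightarrow> (\<exists>c. c \<noteq> 0 \<and> reflect_poly g = smult c g)"

end

theory Submission
  imports Defs
begin


lemma xpm1_degree: "n \<ge> 1 \<Longrightarrow> degree (xpm1 n :: 'a::field poly) = n"
proof -
  assume "n \<ge> 1"
  have "xpm1 n = monom (1::'a) n + (-1)" by (simp add: xpm1_def)
  also have "degree \<dots> = n" using \<open>n \<ge> 1\<close>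
    by (subst degree_add_eq_left) (auto simp: degree_monom_eq)
  finally show ?thesis .
qed

lemma xpm1_ne0: "n \<ge> 1 \<Longrightarrow> xpm1 n \<noteq> (0 :: 'a::field poly)"
  using xpm1_degree[of n] by (metis degree_0 not_one_le_zero)

lemma xpm1_dvd_mult: "xpm1 n dvd (xpm1 (n * k) :: 'a::field poly)"
proof (induction k)
  case 0
  then show ?case by (simp add: xpm1_def)
next
  case (Suc k)
  have "xpm1 (n * Suc k) = monom 1 n * xpm1 (n * k) + (xpm1 n :: 'a poly)"
    by (simp add: xpm1_def algebra_simps mult_monom)
  then show ?case using Suc by simp
qed

lemma monom_mod_dvd: "xpm1 n dvd monom (c::'a::field) m - monom c (m mod n)"
proof -
  have "monom c m = monom c (m mod n) * monom 1 (n * (m div n))"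
    by (simp add: mult_monom)
  then have "monom c m - monom c (m mod n) = monom c (m mod n) * xpm1 (n * (m div n))"
    by (simp add: xpm1_def algebra_simps)
  then show ?thesis using xpm1_dvd_mult[of n "m div n"] by (metis dvd_mult)
qed

lemma monom_cong_dvd: "a mod n = b mod n \<Longrightarrow> xpm1 n dvd monom (c::'a::field) a - monom c b"
proof -
  assume h: "a mod n = b mod n"
  have "monom c a - monom c b = (monom c a - monom c (a mod n)) - (monom c b - monom c (b mod n))"
    using h by simp
  then show ?thesis using monom_mod_dvd[of n c a] monom_mod_dvd[of n c b]
    by (metis dvd_diff)
qed

lemma mod_uniq: "degree r < degree y \<Longrightarrow> y dvd x - r \<Longrightarrow> x mod y = (r :: 'a::field poly)"
proof -
  assume a: "degree r < degree y" "y dvd x - r"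
  then obtain k where "x - r = y * k" by (auto elim: dvdE)
  then have "x = y * k + r" by (simp add: algebra_simps)
  then have "x mod y = r mod y" by simp
  also have "\<dots> = r" using a(1) by (rule mod_poly_less)
  finally show ?thesis .
qed

lemma fold1:
  assumes "n \<ge> 1"
  shows "(\<Sum>s\<in>S. monom (c s) (m s)) mod xpm1 n = (\<Sum>s\<in>S. monom (c s :: 'a::field) (m s mod n))"
proof (rule mod_uniq)
  show "degree (\<Sum>s\<in>S. monom (c s) (m s mod n)) < degree (xpm1 n :: 'a poly)"
    using assms by (simp add: xpm1_degree, intro degree_sum_less)
      (auto intro: le_less_trans[OF degree_monom_le])
  have "(\<Sum>s\<in>S. monom (c s) (m s)) - (\<Sum>s\<in>S. monom (c s) (m s mod n))
     = (\<Sum>s\<in>S. monom (c s) (m s) - monom (c s) (m s mod n))"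
    by (simp add: sum_subtractf)
  also have "xpm1 n dvd \<dots>" by (intro dvd_sum monom_mod_dvd)
  finally show "xpm1 n dvd (\<Sum>s\<in>S. monom (c s) (m s)) - (\<Sum>s\<in>S. monom (c s) (m s mod n))" .
qed

lemma fold2:
  assumes "n \<ge> 1"
  shows "(\<Sum>s\<in>S. \<Sum>r\<in>T. monom (c s r) (m s r)) mod xpm1 n
       = (\<Sum>s\<in>S. \<Sum>r\<in>T. monom (c s r :: 'a::field) (m s r mod n))"
proof (rule mod_uniq)
  show "degree (\<Sum>s\<in>S. \<Sum>r\<in>T. monom (c s r) (m s r mod n)) < degree (xpm1 n :: 'a poly)"
    using assms by (simp add: xpm1_degree, intro degree_sum_less)
      (auto intro!: degree_sum_less intro: le_less_trans[OF degree_monom_le])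
  have "(\<Sum>s\<in>S. \<Sum>r\<in>T. monom (c s r) (m s r)) - (\<Sum>s\<in>S. \<Sum>r\<in>T. monom (c s r) (m s r mod n))
     = (\<Sum>s\<in>S. \<Sum>r\<in>T. monom (c s r) (m s r) - monom (c s r) (m s r mod n))"
    by (simp add: sum_subtractf)
  also have "xpm1 n dvd \<dots>" by (intro dvd_sum monom_mod_dvd)
  finally show "xpm1 n dvd (\<Sum>s\<in>S. \<Sum>r\<in>T. monom (c s r) (m s r)) - (\<Sum>s\<in>S. \<Sum>r\<in>T. monom (c s r) (m s r mod n))" .
qed

lemma coeff_mod_ge:
  assumes "n \<ge> 1" "k \<ge> n"
  shows "coeff (Y mod xpm1 n :: 'a::field poly) k = 0"
proof (cases "Y mod xpm1 n = 0")
  case False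
  then have "degree (Y mod xpm1 n) < n"
    using degree_mod_less'[OF xpm1_ne0[OF assms(1)] False] xpm1_degree[OF assms(1), where 'a='a] by simp
  then show ?thesis using assms by (intro coeff_eq_0) auto
qed simp

definition Pw :: "nat \<Rightarrow> (nat \<Rightarrow> 'a::field) \<Rightarrow> 'a poly" where
  "Pw n w = (\<Sum>k<n. monom (w k) k)"

definition Wd :: "nat \<Rightarrow> 'a::field poly \<Rightarrow> nat \<Rightarrow> 'a" where
  "Wd n Y = (\<lambda>k. coeff (Y mod xpm1 n) k)"

definition cycF :: "nat \<Rightarrow> (nat \<Rightarrow> 'a::field) \<Rightarrow> (nat \<Rightarrow> 'a) \<Rightarrow> nat \<Rightarrow> 'a" where
  "cycF n a b = (\<lambda>k. if k < n then (\<Sum>i<n. \<Sum>j<n. if (i + j) mod n = k then a i * b j else 0) else 0)"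

definition Jp :: "nat \<Rightarrow> 'a::field poly \<Rightarrow> 'a poly" where
  "Jp n V = pcompose V (monom 1 (n - 1))"

lemma cycF_Wd:
  assumes "n \<ge> 1"
  shows "cycF n a b = Wd n (Pw n a * Pw n b)"
proof
  fix k
  have "Pw n a * Pw n b = (\<Sum>i<n. \<Sum>j<n. monom (a i * b j) (i + j))"
    by (simp add: Pw_def sum_product mult_monom)
  then have "Pw n a * Pw n b mod xpm1 n = (\<Sum>i<n. \<Sum>j<n. monom (a i * b j) ((i + j) mod n))"
    using fold2[OF assms] by simp
  then show "cycF n a b k = Wd n (Pw n a * Pw n b) k"
    using coeff_mod_ge[OF assms, of k "Pw n a * Pw n b"]
    by (auto simp: cycF_def Wd_def coeff_sum)
qed

lemma Pw_Wd:
  assumes "n \<ge> 1"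
  shows "Pw n (Wd n Y) = Y mod xpm1 n"
proof -
  have "degree (Y mod xpm1 n) \<le> n - 1"
    using degree_mod_less[OF xpm1_ne0[OF assms], of Y] xpm1_degree[OF assms, where 'a='a] by auto
  then have "(\<Sum>i\<le>n-1. monom (coeff (Y mod xpm1 n) i) i) = Y mod xpm1 n"
    by (rule poly_as_sum_of_monoms')
  moreover have "{..n-1} = {..<n}" using assms by auto
  ultimately show ?thesis by (simp add: Pw_def Wd_def)
qed

lemma Wd_eq0_iff: "Wd n Y = (\<lambda>_. 0) \<longleftrightarrow> xpm1 n dvd Y"
proof -
  have "Wd n Y = (\<lambda>_. 0) \<longleftrightarrow> Y mod xpm1 n = 0"
    by (auto simp: Wd_def poly_eq_iff fun_eq_iff)
  then show ?thesis by (simp add: mod_eq_0_iff_dvd)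
qed

lemma Wd_mod: "Wd n (Y mod xpm1 n) = Wd n Y"
  by (simp add: Wd_def)



lemma idx1: "k < n \<Longrightarrow> l < (n::nat) \<Longrightarrow> ((k + (n-1)*l) mod n = 0) = (k = l)"
  by (smt (verit, best) One_nat_def add.left_commute add_cancel_right_right
    add_diff_cancel_left' left_diff_distrib' less_imp_add_positive
    mod_add_eq mod_if mod_mult_self1_is_0 mult_Suc mult_eq_if)

lemma idx2: "k < n \<Longrightarrow> l < (n::nat) \<Longrightarrow> ((n - k + l) mod n = 0) = (l = k)"
  by (metis add.assoc add.commute add_diff_inverse_nat mod_add_right_eq
    mod_add_self2 mod_less mod_self order.asym)

lemma idx3: assumes "n \<ge> 1" shows "((n-1)*(n-1)) mod n = 1 mod (n::nat)"
proof (cases "n = 1")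
  case False
  define m where "m = n - 2"
  have n: "n = m + 2" using False assms by (simp add: m_def)
  have eq: "(n-1)*(n-1) = 1 + n*m" by (simp add: n algebra_simps)
  show ?thesis by (simp only: eq mod_mult_self2)
qed simp

lemma pcompose_monom: "pcompose (monom c l) q = smult c (q ^ l)"
  by (induction l) (simp_all add: monom_0 monom_Suc pcompose_pCons)

lemma Jp_monom: "Jp n (monom c l) = monom c ((n-1)*l)"
  by (simp add: Jp_def pcompose_monom monom_power smult_monom mult.commute)

lemma Jp_mult: "Jp n (A * B) = Jp n A * Jp n B"
  by (simp add: Jp_def pcompose_mult)

lemma Jp_diff: "Jp n (A - B) = Jp n A - Jp n B"
  by (simp add: Jp_def pcompose_diff)

lemma Jp_xpm1: "xpm1 n dvd Jp n (xpm1 n :: 'a::field poly)"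
proof -
  have "Jp n (xpm1 n :: 'a poly) = xpm1 (n * (n - 1))"
    by (simp add: Jp_def xpm1_def pcompose_diff pcompose_monom monom_power mult.commute pcompose_1)
  then show ?thesis using xpm1_dvd_mult by metis
qed

lemma Jp_dvd: "xpm1 n dvd V \<Longrightarrow> xpm1 n dvd Jp n (V :: 'a::field poly)"
proof -
  assume "xpm1 n dvd V"
  then obtain K where "V = xpm1 n * K" by (auto elim: dvdE)
  then have "Jp n V = Jp n (xpm1 n) * Jp n K" by (simp add: Jp_mult)
  then show ?thesis using Jp_xpm1[where 'a='a, of n] by simp
qed

lemma Jp_cong: "xpm1 n dvd A - B \<Longrightarrow> xpm1 n dvd Jp n A - Jp n (B :: 'a::field poly)"
  using Jp_dvd[of n "A - B"] by (simp add: Jp_diff)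

lemma pcompose_cong:
  "N dvd q1 - q2 \<Longrightarrow> N dvd pcompose V q1 - pcompose V (q2 :: 'a::field poly)"
proof (induction V rule: pCons_induct)
  case 0
  then show ?case by simp
next
  case (pCons a p)
  have "pcompose (pCons a p) q1 - pcompose (pCons a p) q2
      = (q1 - q2) * pcompose p q1 + q2 * (pcompose p q1 - pcompose p q2)"
    by (simp add: pcompose_pCons algebra_simps)
  then show ?case using pCons by simp
qed

lemma JJ: assumes "n \<ge> 1" shows "xpm1 n dvd Jp n (Jp n V) - (V :: 'a::field poly)"
proof -
  have q: "pcompose (monom (1::'a) (n-1)) (monom 1 (n-1)) = monom 1 ((n-1)*(n-1))"
    by (simp add: pcompose_monom monom_power)
  have e1: "Jp n (Jp n V) = pcompose V (monom 1 ((n-1)*(n-1)))"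
    unfolding Jp_def q[symmetric] by (rule pcompose_assoc[symmetric])
  have e2: "pcompose V (monom 1 1) = V" by (simp add: monom_Suc monom_0)
  have "xpm1 n dvd monom (1::'a) ((n-1)*(n-1)) - monom 1 1"
    using idx3[OF assms] by (intro monom_cong_dvd) simp
  then have "xpm1 n dvd pcompose V (monom 1 ((n-1)*(n-1))) - pcompose V (monom 1 1)"
    by (rule pcompose_cong)
  then show ?thesis by (simp only: e1 e2)
qed

lemma Jp_dvd_iff: assumes "n \<ge> 1" shows "xpm1 n dvd Jp n V \<longleftrightarrow> xpm1 n dvd (V :: 'a::field poly)"
proof
  assume "xpm1 n dvd Jp n V"
  then have a: "xpm1 n dvd Jp n (Jp n V)" by (rule Jp_dvd)
  have "V = Jp n (Jp n V) - (Jp n (Jp n V) - V)" by simp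
  also have "xpm1 n dvd \<dots>" using a JJ[OF assms, of V] by (rule dvd_diff)
  finally show "xpm1 n dvd V" .
qed (rule Jp_dvd)

lemma inner_lemma:
  fixes U V :: "'a::field poly"
  assumes "n \<ge> 1"
  shows "(\<Sum>k<n. coeff (U mod xpm1 n) k * coeff (V mod xpm1 n) k)
       = coeff ((U * Jp n V) mod xpm1 n) (0 :: nat)" (is "?L = ?R")
proof -
  define u where "u = Wd n U"
  define v where "v = Wd n V"
  have U: "U mod xpm1 n = (\<Sum>k<n. monom (u k) k)"
    using Pw_Wd[OF assms, of U] by (simp add: u_def Pw_def)
  have V: "Jp n (V mod xpm1 n) = (\<Sum>l<n. monom (v l) ((n-1)*l))"
  proof -
    have "Jp n (V mod xpm1 n) = Jp n (\<Sum>l<n. monom (v l) l)"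
      using Pw_Wd[OF assms, of V] by (simp add: v_def Pw_def)
    also have "\<dots> = (\<Sum>l<n. Jp n (monom (v l) l))"
      unfolding Jp_def by (rule pcompose_sum)
    finally show ?thesis by (simp add: Jp_monom)
  qed
  have "xpm1 n dvd U * Jp n V - (U mod xpm1 n) * Jp n (V mod xpm1 n)"
  proof -
    have "U * Jp n V - (U mod xpm1 n) * Jp n (V mod xpm1 n)
       = U * (Jp n V - Jp n (V mod xpm1 n)) + (U - U mod xpm1 n) * Jp n (V mod xpm1 n)"
      by (simp add: algebra_simps)
    moreover have "xpm1 n dvd Jp n V - Jp n (V mod xpm1 n)"
      by (intro Jp_cong) (simp add: mod_eq_dvd_iff[symmetric])
    moreover have "xpm1 n dvd U - U mod xpm1 n"
      by (simp add: mod_eq_dvd_iff[symmetric])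
    ultimately show ?thesis by simp
  qed
  then have "(U * Jp n V) mod xpm1 n = ((U mod xpm1 n) * Jp n (V mod xpm1 n)) mod xpm1 n"
    by (simp add: mod_eq_dvd_iff)
  also have "\<dots> = (\<Sum>k<n. \<Sum>l<n. monom (u k * v l) (k + (n-1)*l)) mod xpm1 n"
    by (simp add: U V sum_product mult_monom)
  also have "\<dots> = (\<Sum>k<n. \<Sum>l<n. monom (u k * v l) ((k + (n-1)*l) mod n))"
    by (rule fold2[OF assms])
  finally have "?R = (\<Sum>k<n. \<Sum>l<n. if (k + (n-1)*l) mod n = 0 then u k * v l else 0)"
    by (simp add: coeff_sum)
  also have "\<dots> = (\<Sum>k<n. \<Sum>l<n. if l = k then u k * v l else 0)"
    by (intro sum.cong refl) (use idx1 in auto)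
  also have "\<dots> = (\<Sum>k<n. u k * v k)" by simp
  finally show ?thesis by (simp add: u_def v_def Wd_def)
qed

lemma shift_lemma:
  assumes "n \<ge> 1" and h: "\<And>s. coeff ((monom 1 s * Y) mod xpm1 n) 0 = (0::'a::field)"
  shows "xpm1 n dvd Y"
proof -
  define y where "y = Wd n Y"
  have Y: "Y mod xpm1 n = (\<Sum>l<n. monom (y l) l)"
    using Pw_Wd[OF assms(1), of Y] by (simp add: y_def Pw_def)
  have "y k = 0" for k
  proof (cases "k < n")
    case True
    define s where "s = n - k"
    have "(monom 1 s * Y) mod xpm1 n = (monom 1 s * (Y mod xpm1 n)) mod xpm1 n"
      by (simp add: mod_mult_right_eq)
    also have "\<dots> = (\<Sum>l<n. monom (y l) (s + l)) mod xpm1 n"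
      by (simp add: Y sum_distrib_left mult_monom)
    also have "\<dots> = (\<Sum>l<n. monom (y l) ((s + l) mod n))"
      by (rule fold1[OF assms(1)])
    finally have "0 = (\<Sum>l<n. if (s + l) mod n = 0 then y l else 0)"
      using h[of s] by (simp add: coeff_sum)
    also have "\<dots> = (\<Sum>l<n. if l = k then y l else 0)"
      by (intro sum.cong refl) (use idx2 True in \<open>auto simp: s_def\<close>)
    also have "\<dots> = y k" using True by simp
    finally show ?thesis by simp
  next
    case False
    then show ?thesis using coeff_mod_ge[OF assms(1), where 'a='a, of k Y] by (simp add: y_def Wd_def)
  qed
  then have "Y mod xpm1 n = 0" by (simp add: y_def Wd_def poly_eq_iff)
  then show ?thesis by (simp add: mod_eq_0_iff_dvd)
qed



lemma dvd_diff_iff: "N dvd X - Y \<Longrightarrow> (N dvd X \<longleftrightarrow> N dvd (Y :: 'a::field poly))"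
  by (metis diff_add_cancel dvd_add_right_iff add.commute)

lemma reflect_as_sum:
  "reflect_poly g = (\<Sum>j\<le>degree g. monom (coeff g j) (degree g - j))"
proof (rule poly_eqI)
  fix k
  show "coeff (reflect_poly g) k = coeff (\<Sum>j\<le>degree g. monom (coeff g j) (degree g - j)) k"
  proof (cases "k \<le> degree g")
    case True
    have "(\<Sum>j\<le>degree g. if degree g - j = k then coeff g j else 0)
        = (\<Sum>j\<le>degree g. if j = degree g - k then coeff g j else 0)"
      by (intro sum.cong refl) (use True in auto)
    also have "\<dots> = coeff g (degree g - k)" by simp
    finally show ?thesis using True by (simp add: coeff_reflect_poly coeff_sum)
  next
    case False
    then show ?thesis by (auto simp: coeff_reflect_poly coeff_sum intro!: sum.neutral)
  qed
qed

lemma reflect_cong: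
  assumes "n \<ge> 1"
  shows "xpm1 n dvd monom 1 (degree g) * Jp n g - reflect_poly (g :: 'a::field poly)"
proof -
  define d where "d = degree g"
  have "Jp n g = (\<Sum>j\<le>d. Jp n (monom (coeff g j) j))"
    unfolding Jp_def d_def by (subst poly_as_sum_of_monoms[symmetric, of g], subst pcompose_sum) simp
  then have "monom 1 d * Jp n g = (\<Sum>j\<le>d. monom (coeff g j) (d + (n-1)*j))"
    by (simp add: Jp_monom sum_distrib_left mult_monom)
  moreover have "reflect_poly g = (\<Sum>j\<le>d. monom (coeff g j) (d - j))"
    unfolding d_def by (rule reflect_as_sum)
  ultimately have "monom 1 d * Jp n g - reflect_poly g
     = (\<Sum>j\<le>d. monom (coeff g j) (d + (n-1)*j) - monom (coeff g j) (d - j))"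
    by (simp add: sum_subtractf)
  also have "xpm1 n dvd \<dots>"
  proof (intro dvd_sum monom_cong_dvd)
    fix j assume "j \<in> {..d}"
    then have j: "j \<le> d" by simp
    have "(n-1)*j + j = n*j" using assms by (simp add: algebra_simps)
    then have "d + (n-1)*j = (d - j) + j*n" using j by (simp add: algebra_simps)
    then show "(d + (n-1)*j) mod n = (d - j) mod n" by simp
  qed
  finally show ?thesis by (simp add: d_def)
qed

lemma xpm1_unit_cancel:
  assumes "n \<ge> 1" "xpm1 n dvd monom 1 k * V"
  shows "xpm1 n dvd (V :: 'a::field poly)"
proof -
  have eq: "monom 1 (n*k) * V = monom 1 (k*(n-1)) * (monom 1 k * V)"
    using assms(1) by (simp add: mult_monom algebra_simps mult.assoc[symmetric])
  have a: "xpm1 n dvd monom 1 (n*k) * V" unfolding eq by (rule dvd_mult[OF assms(2)])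
  have b: "xpm1 n dvd xpm1 (n*k) * V" using xpm1_dvd_mult[where 'a='a, of n k] by (rule dvd_mult2)
  have "V = monom 1 (n*k) * V - xpm1 (n*k) * V" by (simp add: xpm1_def algebra_simps)
  then show ?thesis using a b by (metis dvd_diff)
qed

lemma coprime_char:
  fixes h gs :: "'a::field_gcd poly"
  assumes "h \<noteq> 0"
  shows "(\<forall>A. h dvd gs * A \<longrightarrow> h dvd A) \<longleftrightarrow> coprime h gs"
proof
  assume H: "\<forall>A. h dvd gs * A \<longrightarrow> h dvd A"
  define c where "c = gcd h gs"
  have c0: "c \<noteq> 0" using assms by (simp add: c_def)
  have "h dvd gs * (h div c)"
  proof -
    have "gs * (h div c) = (gs div c) * h"
      by (metis c_def dvd_div_mult gcd_dvd1 gcd_dvd2 mult.commute dvd_div_mult2_eq)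
    then show ?thesis by simp
  qed
  then have "h dvd h div c" using H by blast
  then have "h * c dvd (h div c) * c" by (simp add: mult_dvd_mono)
  then have "h * c dvd h * 1" using c0 by (simp add: c_def)
  then have "c dvd 1" using assms by (subst (asm) dvd_mult_cancel_left) auto
  then show "coprime h gs" using is_unit_gcd c_def by metis
next
  assume "coprime h gs"
  then show "\<forall>A. h dvd gs * A \<longrightarrow> h dvd A"
    by (simp add: coprime_dvd_mult_right_iff)
qed



lemma field_unit: "c \<noteq> 0 \<Longrightarrow> is_unit (c::'a::field_gcd)"
  by (intro dvdI[of _ _ "inverse c"]) simp

lemma prime_poly_monic:
  fixes f :: "'a::field_gcd poly"
  assumes "prime f"
  shows "lead_coeff f = 1"
proof -
  have f0: "f \<noteq> 0" using assms by simp
  have "unit_factor f = 1"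
    using assms f0 by (metis normalize_prime unit_factor_normalize)
  then have u: "unit_factor (lead_coeff f) = 1"
    by (simp add: unit_factor_poly_def one_pCons)
  have "lead_coeff f \<noteq> 0" using f0 by simp
  then have "is_unit (lead_coeff f)" by (intro dvdI[of _ _ "inverse (lead_coeff f)"]) simp
  then have "normalize (lead_coeff f) = 1" by (rule is_unit_normalize)
  then show ?thesis using normalize_mult_unit_factor[of "lead_coeff f"] u by simp
qed

lemma reflect_xpm1:
  assumes "n \<ge> 1"
  shows "reflect_poly (xpm1 n :: 'a::field poly) = - xpm1 n"
proof (rule poly_eqI)
  fix k
  have dN: "degree (xpm1 n :: 'a poly) = n" using assms by (rule xpm1_degree)
  have "coeff (reflect_poly (xpm1 n :: 'a poly)) k = (if k > n then 0 else coeff (xpm1 n :: 'a poly) (n - k))"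
    by (simp add: coeff_reflect_poly dN)
  then show "coeff (reflect_poly (xpm1 n :: 'a poly)) k = coeff (- xpm1 n) k"
    using assms by (cases "k = 0"; cases "k = n"; cases "k < n")
      (auto simp: xpm1_def coeff_1 coeff_monom)
qed

lemma poly_LCD:
  fixes g :: "'a::field_gcd poly"
  assumes n1: "n \<ge> 1" and mon: "lead_coeff g = 1" and gd: "g dvd xpm1 n"
  shows "(\<forall>A. xpm1 n dvd g * Jp n (A * g) \<longrightarrow> xpm1 n dvd A * g) \<longleftrightarrow>
         (self_reciprocal g \<and> (\<forall>f. lead_coeff f = 1 \<and> irreducible f \<and> f dvd g \<longrightarrow>
                    multiplicity f g = multiplicity f (xpm1 n :: 'a poly)))"
proof -
  define N :: "'a poly" where "N = xpm1 n"
  define h where "h = N div g"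
  define gs where "gs = reflect_poly g"
  define d where "d = degree g"
  have g0: "g \<noteq> 0" using mon by auto
  have N0: "N \<noteq> 0" using xpm1_ne0[OF n1] by (simp add: N_def)
  have Nh: "N = g * h" using gd by (simp add: N_def h_def)
  have h0: "h \<noteq> 0" using N0 Nh by auto
  have cg0: "coeff g 0 \<noteq> 0"
  proof
    assume "coeff g 0 = 0"
    then have "poly g 0 = 0" by (simp add: poly_0_coeff_0)
    then have "poly N 0 = 0" by (simp add: Nh)
    moreover have "poly N 0 = -1" using n1 by (simp add: N_def xpm1_def poly_monom)
    ultimately show False by simp
  qed
  have step1: "N dvd g * Jp n (A * g) \<longleftrightarrow> h dvd gs * A" for A
  proof -
    have "N dvd g * Jp n (A * g) \<longleftrightarrow> N dvd Jp n (g * Jp n (A * g))"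
      using Jp_dvd_iff[OF n1, of "g * Jp n (A * g)"] by (simp add: N_def)
    also have "Jp n (g * Jp n (A * g)) = Jp n g * Jp n (Jp n (A * g))" by (simp add: Jp_mult)
    also have "N dvd Jp n g * Jp n (Jp n (A * g)) \<longleftrightarrow> N dvd Jp n g * (A * g)"
    proof (rule dvd_diff_iff)
      have "Jp n g * Jp n (Jp n (A * g)) - Jp n g * (A * g) = Jp n g * (Jp n (Jp n (A * g)) - A * g)"
        by (simp add: algebra_simps)
      then show "N dvd Jp n g * Jp n (Jp n (A * g)) - Jp n g * (A * g)"
        using JJ[OF n1, of "A * g"] by (simp add: N_def)
    qed
    also have "N dvd Jp n g * (A * g) \<longleftrightarrow> N dvd monom 1 d * (Jp n g * (A * g))"
      using xpm1_unit_cancel[OF n1, of d "Jp n g * (A * g)"] by (auto simp: N_def)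
    also have "\<dots> \<longleftrightarrow> N dvd gs * (A * g)"
    proof (rule dvd_diff_iff)
      have "monom 1 d * (Jp n g * (A * g)) - gs * (A * g) = (monom 1 d * Jp n g - gs) * (A * g)"
        by (simp add: algebra_simps)
      then show "N dvd monom 1 d * (Jp n g * (A * g)) - gs * (A * g)"
        using reflect_cong[OF n1, of g] by (simp add: N_def d_def gs_def)
    qed
    also have "\<dots> \<longleftrightarrow> g * h dvd g * (gs * A)" by (simp add: Nh algebra_simps)
    also have "\<dots> \<longleftrightarrow> h dvd gs * A" using g0 by simp
    finally show ?thesis .
  qed
  have step2: "N dvd A * g \<longleftrightarrow> h dvd A" for A
    using g0 by (simp add: Nh mult.commute)
  have LHS: "(\<forall>A. N dvd g * Jp n (A * g) \<longrightarrow> N dvd A * g) \<longleftrightarrow> coprime h gs"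
    using coprime_char[OF h0, of gs] by (simp add: step1 step2)
  have gsN: "gs dvd N"
  proof -
    have "gs * reflect_poly h = reflect_poly N" by (simp add: Nh gs_def reflect_poly_mult)
    also have "\<dots> = - N" using reflect_xpm1[OF n1] by (simp add: N_def)
    finally have "N = gs * (- reflect_poly h)" by simp
    then show ?thesis by (metis dvd_triv_left)
  qed
  have dgs: "degree gs = degree g" using cg0 by (simp add: gs_def)
  have gs0: "gs \<noteq> 0" using g0 by (simp add: gs_def)
  have step3: "coprime h gs \<longleftrightarrow> self_reciprocal g \<and> coprime g h"
  proof
    assume cop: "coprime h gs"
    have "gs dvd g * h" using gsN Nh by simp
    moreover have "coprime gs h" using cop by (simp add: coprime_commute)
    ultimately have "gs dvd g" by (simp add: coprime_dvd_mult_left_iff)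
    then obtain k where k: "g = gs * k" by (auto elim: dvdE)
    have k0: "k \<noteq> 0" using g0 k by auto
    have "degree g = degree gs + degree k" using k gs0 k0 by (simp add: degree_mult_eq)
    then have "degree k = 0" using dgs by simp
    then obtain c where c: "k = [:c:]" by (metis degree_eq_zeroE)
    have c0: "c \<noteq> 0" using k0 c by simp
    have "gs = smult (inverse c) g" using k c c0 by (simp add: smult_smult[symmetric])
    then have sr: "self_reciprocal g" using c0 unfolding self_reciprocal_def gs_def
      by (intro exI[of _ "inverse c"]) simp
    have "coprime h [:c:]" using c0 by (intro is_unit_right_imp_coprime) (simp add: is_unit_const_poly_iff field_unit)
    moreover have "g = gs * [:c:]" using k c by simp
    ultimately have "coprime h g" using cop by (simp only: coprime_mult_right_iff)
    then show "self_reciprocal g \<and> coprime g h" using sr by (simp add: coprime_commute)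
  next
    assume a: "self_reciprocal g \<and> coprime g h"
    then obtain c where c: "c \<noteq> 0" "gs = smult c g" by (auto simp: self_reciprocal_def gs_def)
    have "coprime h [:c:]" using c by (intro is_unit_right_imp_coprime) (simp add: is_unit_const_poly_iff field_unit)
    moreover have "gs = [:c:] * g" using c by simp
    ultimately show "coprime h gs" using a by (simp only: coprime_mult_right_iff coprime_commute)
  qed
  have step4: "coprime g h \<longleftrightarrow> (\<forall>f. lead_coeff f = 1 \<and> irreducible f \<and> f dvd g \<longrightarrow>
                    multiplicity f g = multiplicity f N)"
  proof
    assume cop: "coprime g h"
    show "\<forall>f. lead_coeff f = 1 \<and> irreducible f \<and> f dvd g \<longrightarrow> multiplicity f g = multiplicity f N"
    proof (intro allI impI)
      fix f :: "'a poly" assume f: "lead_coeff f = 1 \<and> irreducible f \<and> f dvd g"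
      have pf: "prime_elem f" using f by (simp add: irreducible_imp_prime_elem)
      have "\<not> f dvd h"
      proof
        assume "f dvd h"
        then have "is_unit f" using cop f coprime_common_divisor by blast
        then show False using f by (auto simp: irreducible_def)
      qed
      then have "multiplicity f h = 0" by (rule not_dvd_imp_multiplicity_0)
      then show "multiplicity f g = multiplicity f N"
        using prime_elem_multiplicity_mult_distrib[OF pf g0 h0] by (simp add: Nh)
    qed
  next
    assume H: "\<forall>f. lead_coeff f = 1 \<and> irreducible f \<and> f dvd g \<longrightarrow> multiplicity f g = multiplicity f N"
    show "coprime g h"
    proof (rule ccontr)
      assume "\<not> coprime g h"
      then obtain c where c: "c dvd g" "c dvd h" "\<not> is_unit c" by (rule not_coprimeE)
      have "c \<noteq> 0" using c g0 by auto
      then obtain f where f: "prime f" "f dvd c" using c(3) by (metis prime_divisorE)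
      have fg: "f dvd g" "f dvd h" using f c dvd_trans by blast+
      have irr: "irreducible f" using f by (simp add: prime_elem_imp_irreducible)
      have "lead_coeff f = 1" using f(1) by (rule prime_poly_monic)
      then have "multiplicity f g = multiplicity f N" using H irr fg by blast
      moreover have "multiplicity f N = multiplicity f g + multiplicity f h"
        using prime_elem_multiplicity_mult_distrib[of f g h] f g0 h0 by (simp add: Nh)
      moreover have "multiplicity f h \<noteq> 0"
        using multiplicity_eq_zero_iff[of h f] h0 fg f by (auto simp: prime_def)
      ultimately show False by simp
    qed
  qed
  show ?thesis using LHS step3 step4 by (simp add: N_def)
qed



definition ev :: "'a::field \<Rightarrow> (nat \<Rightarrow> 'a poly) \<Rightarrow> nat \<Rightarrow> 'a" where
  "ev x w = (\<lambda>k. poly (w k) x)"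

definition Gpoly :: "nat \<Rightarrow> (nat \<Rightarrow> 'a::field) \<Rightarrow> (nat \<Rightarrow> 'a poly) \<Rightarrow> (nat \<Rightarrow> 'a poly) \<Rightarrow> 'a poly poly" where
  "Gpoly e \<alpha> hh g = (\<Sum>i\<in>{1..e}. [:mu e \<alpha> hh i:] * map_poly (\<lambda>c. [:c:]) (g i))"

definition liftw :: "nat \<Rightarrow> nat \<Rightarrow> (nat \<Rightarrow> 'a::field) \<Rightarrow> (nat \<Rightarrow> 'a poly) \<Rightarrow> (nat \<Rightarrow> nat \<Rightarrow> 'a) \<Rightarrow> nat \<Rightarrow> 'a poly" where
  "liftw e n \<alpha> hh b = (\<lambda>k. if k < n then (\<Sum>l\<in>{1..e}. smult (b l k) (mu e \<alpha> hh l)) mod xpm1 e else 0)"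

lemma poly_if: "poly (if c then a else b) x = (if c then poly a x else poly b x)"
  by simp

context
  fixes e n :: nat and \<alpha> :: "nat \<Rightarrow> 'a::field_gcd" and z hh :: "nat \<Rightarrow> 'a poly"
  assumes e1: "e \<ge> 1" and n1: "n \<ge> 1"
    and Eprod: "xpm1 e = (\<Prod>i\<in>{1..e}. [:- \<alpha> i, 1:])"
    and bez: "\<forall>i\<in>{1..e}. z i * [:- \<alpha> i, 1:] + hh i * (xpm1 e div [:- \<alpha> i, 1:]) = 1"
begin

lemma E_root: "i \<in> {1..e} \<Longrightarrow> poly (xpm1 e) (\<alpha> i) = 0"
  unfolding Eprod poly_prod by (rule prod_zero[of "{1..e}"]) auto

lemma R1: "i \<in> {1..e} \<Longrightarrow> poly (r mod xpm1 e) (\<alpha> i) = poly r (\<alpha> i)"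
proof -
  assume i: "i \<in> {1..e}"
  have "poly r (\<alpha> i) = poly (xpm1 e * (r div xpm1 e) + r mod xpm1 e) (\<alpha> i)"
    by (simp only: mult_div_mod_eq)
  also have "\<dots> = poly (r mod xpm1 e) (\<alpha> i)"
    by (simp only: poly_add poly_mult E_root[OF i] mult_zero_left add_0_left)
  finally show ?thesis by simp
qed

lemma Ghat: "i \<in> {1..e} \<Longrightarrow> xpm1 e div [:- \<alpha> i, 1:] = (\<Prod>l\<in>{1..e}-{i}. [:- \<alpha> l, 1:])"
proof -
  assume i: "i \<in> {1..e}"
  have eq: "xpm1 e = [:- \<alpha> i, 1:] * (\<Prod>l\<in>{1..e}-{i}. [:- \<alpha> l, 1:])"
    unfolding Eprod by (rule prod.remove) (use i in auto)
  show ?thesis unfolding eq by (rule nonzero_mult_div_cancel_left) simp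
qed

lemma Ghat_zero: "i \<in> {1..e} \<Longrightarrow> j \<in> {1..e} \<Longrightarrow> j \<noteq> i \<Longrightarrow> poly (xpm1 e div [:- \<alpha> i, 1:]) (\<alpha> j) = 0"
  apply (simp add: Ghat poly_prod)
  apply (rule bexI[of _ j])
   apply auto
  done

lemma Ghat_one: "i \<in> {1..e} \<Longrightarrow> poly (hh i) (\<alpha> i) * poly (xpm1 e div [:- \<alpha> i, 1:]) (\<alpha> i) = 1"
proof -
  assume i: "i \<in> {1..e}"
  have "poly (z i * [:- \<alpha> i, 1:] + hh i * (xpm1 e div [:- \<alpha> i, 1:])) (\<alpha> i) = 1"
    using bez i by simp
  then show ?thesis by simp
qed

lemma alpha_inj: "inj_on \<alpha> {1..e}"
proof (rule inj_onI, rule ccontr)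
  fix i j assume i: "i \<in> {1..e}" and j: "j \<in> {1..e}" and eq: "\<alpha> i = \<alpha> j" and ne: "i \<noteq> j"
  have "poly (xpm1 e div [:- \<alpha> i, 1:]) (\<alpha> i) = 0"
    using Ghat_zero[OF i j] ne eq by simp
  then show False using Ghat_one[OF i] by simp
qed

lemma mu_eval: "i \<in> {1..e} \<Longrightarrow> j \<in> {1..e} \<Longrightarrow> poly (mu e \<alpha> hh i) (\<alpha> j) = (if i = j then 1 else 0)"
  unfolding mu_def using Ghat_one Ghat_zero by (auto simp: R1)

lemma R4:
  assumes "in_R e r" "\<forall>i\<in>{1..e}. poly r (\<alpha> i) = 0"
  shows "r = 0"
proof (rule ccontr)
  assume r0: "r \<noteq> 0"
  have E0: "xpm1 e \<noteq> (0 :: 'a poly)" by (rule xpm1_ne0[OF e1])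
  have rm: "r mod xpm1 e = r" using assms(1) by (simp add: in_R_def)
  then have "degree r < degree (xpm1 e :: 'a poly)"
    using degree_mod_less'[OF E0, of r] r0 by simp
  then have dr: "degree r < e" using xpm1_degree[OF e1, where 'a='a] by simp
  have "\<alpha> ` {1..e} \<subseteq> {x. poly r x = 0}" using assms(2) by auto
  then have "card (\<alpha> ` {1..e}) \<le> card {x. poly r x = 0}"
    by (intro card_mono poly_roots_finite r0)
  also have "\<dots> \<le> degree r" by (rule card_poly_roots_bound[OF r0])
  finally show False using dr card_image[OF alpha_inj] by simp
qed

lemma R4': "(r mod xpm1 e = 0) \<longleftrightarrow> (\<forall>i\<in>{1..e}. poly r (\<alpha> i) = 0)"
proof
  assume "\<forall>i\<in>{1..e}. poly r (\<alpha> i) = 0"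
  then show "r mod xpm1 e = 0"
    by (intro R4) (auto simp: in_R_def R1)
next
  assume "r mod xpm1 e = 0"
  then show "\<forall>i\<in>{1..e}. poly r (\<alpha> i) = 0"
    using R1 by (metis poly_0)
qed

lemma ev_cyc: "i \<in> {1..e} \<Longrightarrow> ev (\<alpha> i) (cyc_mult e n a b) = cycF n (ev (\<alpha> i) a) (ev (\<alpha> i) b)"
  by (auto simp: ev_def cyc_mult_def cycF_def R1 poly_sum fun_eq_iff intro!: sum.cong)

lemma ev_inner: "i \<in> {1..e} \<Longrightarrow> poly (eucl_inner e n c v) (\<alpha> i) = (\<Sum>k<n. ev (\<alpha> i) c k * ev (\<alpha> i) v k)"
  by (simp add: ev_def eucl_inner_def R1 poly_sum)


lemma coeff_Gp: "i \<in> {1..e} \<Longrightarrow> poly (coeff (Gpoly e \<alpha> hh g) j) (\<alpha> i) = coeff (g i) j"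
proof -
  assume i: "i \<in> {1..e}"
  have "poly (coeff (Gpoly e \<alpha> hh g) j) (\<alpha> i)
      = (\<Sum>l\<in>{1..e}. poly (mu e \<alpha> hh l) (\<alpha> i) * coeff (g l) j)"
    by (simp add: Gpoly_def coeff_sum poly_sum coeff_map_poly mult.commute)
  also have "\<dots> = (\<Sum>l\<in>{1..e}. if l = i then coeff (g l) j else 0)"
    by (intro sum.cong refl) (use i mu_eval in auto)
  also have "\<dots> = coeff (g i) j" using i by simp
  finally show ?thesis .
qed

lemma ev_Gp:
  assumes i: "i \<in> {1..e}" and mon: "lead_coeff (g i) = 1"
  shows "ev (\<alpha> i) (to_word e n (Gpoly e \<alpha> hh g)) = Wd n (g i)"
proof
  fix k
  define D where "D = degree (Gpoly e \<alpha> hh g)"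
  have "coeff (Gpoly e \<alpha> hh g) (degree (g i)) \<noteq> 0"
    using coeff_Gp[OF i, of g "degree (g i)"] mon by auto
  then have dg: "degree (g i) \<le> D" unfolding D_def by (rule le_degree)
  have gm: "g i mod xpm1 n = (\<Sum>j\<le>D. monom (coeff (g i) j) (j mod n))"
    using fold1[OF n1, of "\<lambda>j. coeff (g i) j" "\<lambda>j. j" "{..D}"] poly_as_sum_of_monoms'[OF dg]
    by simp
  show "ev (\<alpha> i) (to_word e n (Gpoly e \<alpha> hh g)) k = Wd n (g i) k"
  proof (cases "k < n")
    case True
    have "ev (\<alpha> i) (to_word e n (Gpoly e \<alpha> hh g)) k
        = (\<Sum>j\<le>D. if j mod n = k then coeff (g i) j else 0)"
      using True by (simp add: ev_def to_word_def R1[OF i] poly_sum D_def poly_if)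
        (intro sum.cong refl, use coeff_Gp[OF i, of g] in simp)
    also have "\<dots> = Wd n (g i) k" by (simp add: Wd_def gm coeff_sum)
    finally show ?thesis .
  next
    case False
    then show ?thesis using coeff_mod_ge[OF n1, where 'a='a, of k "g i"]
      by (simp add: ev_def to_word_def Wd_def)
  qed
qed

lemma lift_words: "liftw e n \<alpha> hh b \<in> words e n"
  by (simp add: liftw_def words_def in_R_def)

lemma ev_lift: "i \<in> {1..e} \<Longrightarrow> ev (\<alpha> i) (liftw e n \<alpha> hh b) = (\<lambda>k. if k < n then b i k else 0)"
proof
  fix k assume i: "i \<in> {1..e}"
  have "(\<Sum>l\<in>{1..e}. b l k * poly (mu e \<alpha> hh l) (\<alpha> i)) = (\<Sum>l\<in>{1..e}. if l = i then b l k else 0)"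
    by (intro sum.cong refl) (use i mu_eval in auto)
  also have "\<dots> = b i k" using i by simp
  finally show "ev (\<alpha> i) (liftw e n \<alpha> hh b) k = (if k < n then b i k else 0)"
    by (simp add: ev_def liftw_def R1[OF i] poly_sum)
qed

lemma words_zero:
  assumes "w \<in> words e n" "\<forall>i\<in>{1..e}. ev (\<alpha> i) w = (\<lambda>_. 0)"
  shows "w = (\<lambda>_. 0)"
proof
  fix j
  show "w j = 0"
  proof (cases "j < n")
    case True
    then have "in_R e (w j)" using assms(1) by (simp add: words_def)
    moreover have "\<forall>i\<in>{1..e}. poly (w j) (\<alpha> i) = 0"
      using assms(2) by (auto simp: ev_def fun_eq_iff)
    ultimately show ?thesis by (rule R4)
  next
    case False
    then show ?thesis using assms(1) by (simp add: words_def)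
  qed
qed

lemma cyc_words: "cyc_mult e n a b \<in> words e n"
  by (simp add: cyc_mult_def words_def in_R_def)

lemma ev_code:
  assumes i: "i \<in> {1..e}" and mon: "lead_coeff (g i) = 1"
  shows "ev (\<alpha> i) (cyc_mult e n a (to_word e n (Gpoly e \<alpha> hh g)))
       = Wd n (Pw n (ev (\<alpha> i) a) * g i)"
proof -
  have "ev (\<alpha> i) (cyc_mult e n a (to_word e n (Gpoly e \<alpha> hh g)))
      = cycF n (ev (\<alpha> i) a) (Wd n (g i))"
    by (simp add: ev_cyc[OF i] ev_Gp[of i g, OF i mon])
  also have "\<dots> = Wd n (Pw n (ev (\<alpha> i) a) * (g i mod xpm1 n))"
    by (simp add: cycF_Wd[OF n1] Pw_Wd[OF n1])
  also have "\<dots> = Wd n (Pw n (ev (\<alpha> i) a) * g i)"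
    by (simp add: Wd_def mod_mult_right_eq)
  finally show ?thesis .
qed

lemma inner_code:
  assumes i: "i \<in> {1..e}" and mon: "lead_coeff (g i) = 1"
  shows "poly (eucl_inner e n (cyc_mult e n b (to_word e n (Gpoly e \<alpha> hh g)))
                              (cyc_mult e n a (to_word e n (Gpoly e \<alpha> hh g)))) (\<alpha> i)
       = coeff ((Pw n (ev (\<alpha> i) b) * g i * Jp n (Pw n (ev (\<alpha> i) a) * g i)) mod xpm1 n) 0"
  by (simp add: ev_inner[OF i] ev_code[of i g, OF i mon] Wd_def inner_lemma[OF n1])

lemma LCD_iff:
  assumes mon: "\<forall>i\<in>{1..e}. lead_coeff (g i) = 1"
  shows "is_LCD e n (cyclic_code_gen e n (to_word e n (Gpoly e \<alpha> hh g)))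
     \<longleftrightarrow> (\<forall>i\<in>{1..e}. \<forall>A. xpm1 n dvd g i * Jp n (A * g i) \<longrightarrow> xpm1 n dvd A * g i)"
proof -
  define G' where "G' = to_word e n (Gpoly e \<alpha> hh g)"
  define C where "C = cyclic_code_gen e n G'"
  define N :: "'a poly" where "N = xpm1 n"
  have z0: "(\<lambda>_. 0 :: 'a poly) = cyc_mult e n (\<lambda>_. 0 :: 'a poly) G'"
    unfolding cyc_mult_def by (rule ext) (simp cong: if_cong)
  have w0: "(\<lambda>_. 0) \<in> words e n" by (simp add: words_def in_R_def)
  have zero_in: "(\<lambda>_. 0) \<in> C \<inter> eucl_dual e n C"
  proof
    show "(\<lambda>_. 0) \<in> C" unfolding C_def cyclic_code_gen_def using z0 w0 by blast
    show "(\<lambda>_. 0) \<in> eucl_dual e n C" using w0 by (simp add: eucl_dual_def eucl_inner_def)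
  qed
  have LCD0: "is_LCD e n C \<longleftrightarrow> (\<forall>x\<in>C \<inter> eucl_dual e n C. x = (\<lambda>_. 0))"
    using zero_in unfolding is_LCD_def by blast
  have inR_inner: "in_R e (eucl_inner e n c v)" for c v
    by (simp add: in_R_def eucl_inner_def)
  have Cmem: "c \<in> C \<longleftrightarrow> (\<exists>b\<in>words e n. c = cyc_mult e n b G')" for c
    unfolding C_def cyclic_code_gen_def by blast
  show ?thesis
    unfolding C_def[symmetric] G'_def[symmetric] LCD0
  proof
    assume L: "\<forall>x\<in>C \<inter> eucl_dual e n C. x = (\<lambda>_. 0)"
    show "\<forall>i\<in>{1..e}. \<forall>A. xpm1 n dvd g i * Jp n (A * g i) \<longrightarrow> xpm1 n dvd A * g i"
    proof (intro ballI allI impI)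
      fix i A assume i: "i \<in> {1..e}" and H: "xpm1 n dvd g i * Jp n (A * g i)"
      define a where "a = liftw e n \<alpha> hh (\<lambda>l k. if l = i then Wd n A k else 0)"
      define x where "x = cyc_mult e n a G'"
      have evai: "ev (\<alpha> i) a = Wd n A"
        using ev_lift[OF i] coeff_mod_ge[OF n1, where 'a='a] by (auto simp: a_def Wd_def fun_eq_iff)
      have evaj: "ev (\<alpha> j) a = (\<lambda>_. 0)" if "j \<in> {1..e}" "j \<noteq> i" for j
        using ev_lift[OF that(1)] that(2) by (auto simp: a_def fun_eq_iff)
      have PA: "Pw n (ev (\<alpha> i) a) = A mod N" by (simp add: evai Pw_Wd[OF n1] N_def)
      have xC: "x \<in> C" using lift_words Cmem x_def a_def by blast
      have xD: "x \<in> eucl_dual e n C"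
        unfolding eucl_dual_def
      proof (intro CollectI conjI ballI)
        show "x \<in> words e n" by (simp add: x_def cyc_words)
        fix c assume "c \<in> C"
        then obtain b where b: "b \<in> words e n" "c = cyc_mult e n b G'" using Cmem by blast
        show "eucl_inner e n c x = 0"
        proof (rule R4[OF inR_inner], intro ballI)
          fix j assume j: "j \<in> {1..e}"
          have eq: "poly (eucl_inner e n c x) (\<alpha> j)
              = coeff ((Pw n (ev (\<alpha> j) b) * g j * Jp n (Pw n (ev (\<alpha> j) a) * g j)) mod xpm1 n) 0"
            using inner_code[of j g b a, OF j] mon j by (simp add: b(2) x_def G'_def)
          show "poly (eucl_inner e n c x) (\<alpha> j) = 0"
          proof (cases "j = i")
            case False
            then have "Pw n (ev (\<alpha> j) a) = 0" using evaj[OF j] by (simp add: Pw_def)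
            then show ?thesis using eq by (simp add: Jp_def)
          next
            case True
            have d1: "N dvd Jp n ((A mod N) * g i) - Jp n (A * g i)"
            proof (unfold N_def, rule Jp_cong)
              have "(A mod xpm1 n) * g i - A * g i = (A mod xpm1 n - A) * g i" by (simp add: algebra_simps)
              moreover have "xpm1 n dvd A mod xpm1 n - A" by (simp add: mod_eq_dvd_iff[symmetric])
              ultimately show "xpm1 n dvd (A mod xpm1 n) * g i - A * g i" by simp
            qed
            have "g i * Jp n ((A mod N) * g i) = g i * Jp n (A * g i) + g i * (Jp n ((A mod N) * g i) - Jp n (A * g i))"
              by (simp add: algebra_simps)
            then have "N dvd g i * Jp n ((A mod N) * g i)" using H d1 by (simp add: N_def)
            then have "N dvd Pw n (ev (\<alpha> i) b) * (g i * Jp n ((A mod N) * g i))" by (rule dvd_mult)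
            then have "(Pw n (ev (\<alpha> i) b) * g i * Jp n ((A mod N) * g i)) mod N = 0"
              by (simp add: mult.assoc)
            then show ?thesis using eq True PA by (simp add: N_def)
          qed
        qed
      qed
      have "x = (\<lambda>_. 0)" using L xC xD by blast
      then have "ev (\<alpha> i) x = (\<lambda>_. 0)" by (simp add: ev_def fun_eq_iff)
      then have "Wd n ((A mod N) * g i) = (\<lambda>_. 0)"
        using ev_code[of i g a, OF i] mon i by (simp add: x_def G'_def PA)
      then have d2: "N dvd (A mod N) * g i" by (simp add: Wd_eq0_iff N_def)
      have "A * g i = (A mod N) * g i + (A - A mod N) * g i" by (simp add: algebra_simps)
      moreover have "N dvd A - A mod N" by (simp add: mod_eq_dvd_iff[symmetric])
      ultimately show "xpm1 n dvd A * g i" using d2 by (simp add: N_def)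
    qed
  next
    assume P: "\<forall>i\<in>{1..e}. \<forall>A. xpm1 n dvd g i * Jp n (A * g i) \<longrightarrow> xpm1 n dvd A * g i"
    show "\<forall>x\<in>C \<inter> eucl_dual e n C. x = (\<lambda>_. 0)"
    proof
      fix x assume x: "x \<in> C \<inter> eucl_dual e n C"
      then obtain a where a: "a \<in> words e n" "x = cyc_mult e n a G'" using Cmem by blast
      have xw: "x \<in> words e n" and orth: "\<forall>c\<in>C. eucl_inner e n c x = 0"
        using x by (auto simp: eucl_dual_def)
      show "x = (\<lambda>_. 0)"
      proof (rule words_zero[OF xw], intro ballI)
        fix i assume i: "i \<in> {1..e}"
        define Ai where "Ai = Pw n (ev (\<alpha> i) a)"
        have evx: "ev (\<alpha> i) x = Wd n (Ai * g i)"
          using ev_code[of i g a, OF i] mon i by (simp add: a(2) G'_def Ai_def)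
        have "xpm1 n dvd g i * Jp n (Ai * g i)"
        proof (rule shift_lemma[OF n1])
          fix s
          define b where "b = liftw e n \<alpha> hh (\<lambda>l k. if l = i then Wd n (monom 1 s) k else 0)"
          have evb: "ev (\<alpha> i) b = Wd n (monom 1 s)"
            using ev_lift[OF i] coeff_mod_ge[OF n1, where 'a='a] by (auto simp: b_def Wd_def fun_eq_iff)
          have cC: "cyc_mult e n b G' \<in> C" using lift_words Cmem b_def by blast
          have "0 = poly (eucl_inner e n (cyc_mult e n b G') x) (\<alpha> i)" using orth cC by simp
          also have "\<dots> = coeff ((Pw n (ev (\<alpha> i) b) * g i * Jp n (Ai * g i)) mod xpm1 n) 0"
            using inner_code[of i g b a, OF i] mon i by (simp add: a(2) G'_def Ai_def)
          also have "(Pw n (ev (\<alpha> i) b) * g i * Jp n (Ai * g i)) mod xpm1 n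
              = ((monom 1 s mod xpm1 n) * (g i * Jp n (Ai * g i))) mod xpm1 n"
            by (simp add: evb Pw_Wd[OF n1] mult.assoc)
          also have "\<dots> = (monom 1 s * (g i * Jp n (Ai * g i))) mod xpm1 n"
            by (rule mod_mult_left_eq)
          finally show "coeff ((monom 1 s * (g i * Jp n (Ai * g i))) mod xpm1 n) 0 = 0" by simp
        qed
        then have "xpm1 n dvd Ai * g i" using P i by blast
        then show "ev (\<alpha> i) x = (\<lambda>_. 0)" using evx by (simp add: Wd_eq0_iff)
      qed
    qed
  qed
qed
end


theorem corollary4p4:
  fixes p m e t n q :: nat
    and \<alpha> :: "nat \<Rightarrow> 'a::{finite,field_gcd}"
    and z h g :: "nat \<Rightarrow> 'a poly"
  assumes "prime p" and "odd p" and "card (UNIV :: 'a set) = q" and "q = p ^ m"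
    and "q = e * t + 1" and "e \<ge> 2" and "t \<ge> 1"
    and "xpm1 e = (\<Prod>i\<in>{1..e}. [:- \<alpha> i, 1:])"
    and "\<forall>i\<in>{1..e}. z i * [:- \<alpha> i, 1:] + h i * (xpm1 e div [:- \<alpha> i, 1:]) = 1"
    and "n \<ge> 1" and "gcd n q \<noteq> 1"
    and "\<forall>i\<in>{1..e}. lead_coeff (g i) = 1 \<and> g i dvd xpm1 n"
  shows "is_LCD e n (cyclic_code_gen e n
            (to_word e n (\<Sum>i\<in>{1..e}. [:mu e \<alpha> h i:] * map_poly (\<lambda>c. [:c:]) (g i))))
         \<longleftrightarrow> (\<forall>i\<in>{1..e}. self_reciprocal (g i) \<and>
               (\<forall>f. lead_coeff f = 1 \<and> irreducible f \<and> f dvd g i \<longrightarrow>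
                    multiplicity f (g i) = multiplicity f (xpm1 n :: 'a poly)))"
proof -
  have e1: "e \<ge> 1" using assms(6) by simp
  have mon: "\<forall>i\<in>{1..e}. lead_coeff (g i) = 1" using assms(12) by blast
  have L: "is_LCD e n (cyclic_code_gen e n (to_word e n (Gpoly e \<alpha> h g)))
     \<longleftrightarrow> (\<forall>i\<in>{1..e}. \<forall>A. xpm1 n dvd g i * Jp n (A * g i) \<longrightarrow> xpm1 n dvd A * g i)"
    by (rule LCD_iff[OF e1 assms(10) assms(8) assms(9) mon])
  have R: "(\<forall>A. xpm1 n dvd g i * Jp n (A * g i) \<longrightarrow> xpm1 n dvd A * g i) \<longleftrightarrow>
         (self_reciprocal (g i) \<and> (\<forall>f. lead_coeff f = 1 \<and> irreducible f \<and> f dvd g i \<longrightarrow>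
                    multiplicity f (g i) = multiplicity f (xpm1 n :: 'a poly)))" if i: "i \<in> {1..e}" for i
    using i assms(12) by (intro poly_LCD[OF assms(10)]) auto
  show ?thesis using L R unfolding Gpoly_def by auto
qed

end
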